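(* Let $0<\alpha<d$, $\mathcal{B}_\alpha\in\{\mathcal{B}^c_\alpha,\mathcal{B}^u_\alpha\}$ and $f\in L^1_{\mathrm{loc}}(\mathbb{R}^d)$. Then for each $B\in\mathcal{B}_\alpha$ and each cube $P\supset Q_B$ we have $\ell(P)^\alpha f_P\leq C\,\ell(Q_B)^\alpha f_{Q_B}$, with $C$ depending only on $d$ and $\alpha$.
   Context: $f_B=\frac1{|B|}\int_B|f|$ for a ball or cube $B$; $r(B)$ is the radius of a ball, $\ell(Q)$ the sidelength of a cube, $\overline B$ the closure. Fix $3^d$ (translated) dyadic grids $\mathcal{D}_1,\dots,\mathcal{D}_{3^d}$ such that every ball $B$ is contained in some cube of $\mathcal{D}=\mathcal{D}_1\cup\dots\cup\mathcal{D}_{3^d}$ of sidelength at most $C_d\,r(B)$; for each ball $B$ let $Q_B$ be such a cube. $\mathrm{M}^c_\alpha f(x)=\sup_{r>0}r^\alpha f_{B(x,r)}$, $\mathrm{M}^u_\alpha f(x)=\sup_{B\ni x}r(B)^\alpha f_B$. $\mathcal{B}^c_\alpha(x)=\{B(x,r)\}$ with $r$ the largest radius with $\mathrm{M}^c_\alpha f(x)=r^\alpha f_{B(x,r)}$; $\mathcal{B}^u_\alpha(x)$ is the set of balls $B$ with $x\in\overline B$, $r(B)^\alpha f_B=\mathrm{M}^u_\alpha f(x)$ and $r(A)^\alpha f_A<\mathrm{M}^u_\alpha f(x)$ for all balls $A\supsetneq B$. $\mathcal{B}^c_\alpha=\bigcup_x\mathcal{B}^c_\alpha(x)$, $\mathcal{B}^u_\alpha=\bigcup_x\mathcal{B}^u_\alpha(x)$.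 *)

theory Defs
  imports "HOL-Analysis.Analysis"
begin

definition avg :: "('a::euclidean_space \<Rightarrow> real) \<Rightarrow> 'a set \<Rightarrow> real" where
  "avg f S = (LINT x:S|lebesgue. \<bar>f x\<bar>) / measure lebesgue S"

definition locally_integrable :: "('a::euclidean_space \<Rightarrow> real) \<Rightarrow> bool" where
  "locally_integrable f \<longleftrightarrow> (\<forall>K. compact K \<longrightarrow> set_integrable lebesgue K f)"

definition cube :: "'a::euclidean_space \<Rightarrow> real \<Rightarrow> 'a set" where
  "cube a l = cbox a (a + l *\<^sub>R One)"

definition Mc :: "real \<Rightarrow> ('a::euclidean_space \<Rightarrow> real) \<Rightarrow> 'a \<Rightarrow> ereal" where
  "Mc \<alpha> f x = (SUP r\<in>{0<..}. ereal (r powr \<alpha> * avg f (ball x r)))"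

definition Mu :: "real \<Rightarrow> ('a::euclidean_space \<Rightarrow> real) \<Rightarrow> 'a \<Rightarrow> ereal" where
  "Mu \<alpha> f x = (SUP (c, r)\<in>{(c, r). 0 < r \<and> x \<in> ball c r}. ereal (r powr \<alpha> * avg f (ball c r)))"

text \<open>Balls represented by (center, radius). B^c_alpha(x): the ball B(x,r) with r the largest
  radius attaining the supremum.\<close>
definition Bc_at :: "real \<Rightarrow> ('a::euclidean_space \<Rightarrow> real) \<Rightarrow> 'a \<Rightarrow> ('a \<times> real) set" where
  "Bc_at \<alpha> f x = {(x, r) | r. 0 < r \<and> ereal (r powr \<alpha> * avg f (ball x r)) = Mc \<alpha> f x
       \<and> (\<forall>s>r. ereal (s powr \<alpha> * avg f (ball x s)) \<noteq> Mc \<alpha> f x)}"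

definition Bu_at :: "real \<Rightarrow> ('a::euclidean_space \<Rightarrow> real) \<Rightarrow> 'a \<Rightarrow> ('a \<times> real) set" where
  "Bu_at \<alpha> f x = {(c, r) | c r. 0 < r \<and> x \<in> closure (ball c r)
       \<and> ereal (r powr \<alpha> * avg f (ball c r)) = Mu \<alpha> f x
       \<and> (\<forall>c' r'. 0 < r' \<and> ball c r \<subset> ball c' r' \<longrightarrow>
             ereal (r' powr \<alpha> * avg f (ball c' r')) < Mu \<alpha> f x)}"

definition Bc :: "real \<Rightarrow> ('a::euclidean_space \<Rightarrow> real) \<Rightarrow> ('a \<times> real) set" where
  "Bc \<alpha> f = (\<Union>x. Bc_at \<alpha> f x)"

definition Bu :: "real \<Rightarrow> ('a::euclidean_space \<Rightarrow> real) \<Rightarrow> ('a \<times> real) set" where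
  "Bu \<alpha> f = (\<Union>x. Bu_at \<alpha> f x)"

end

theory Submission
  imports Defs
begin

lemma One_Basis: "i \<in> Basis \<Longrightarrow> (One::'a::euclidean_space) \<bullet> i = 1"
  by (simp add: inner_sum_left inner_Basis sum.delta' cong: sum.cong)
lemma mem_cube: "x \<in> cube a l \<longleftrightarrow> (\<forall>i\<in>Basis. a\<bullet>i \<le> x\<bullet>i \<and> x\<bullet>i \<le> a\<bullet>i + l)"
  by (simp add: cube_def mem_box inner_add_left One_Basis)

lemma meas_ball: "0 \<le> r \<Longrightarrow> measure lebesgue (ball (c::'a::euclidean_space) r) = r ^ DIM('a) * measure lborel (ball (0::'a) 1)"
proof -
  assume r: "0 \<le> r"
  have "measure lebesgue (ball c r) = measure lborel (ball c r)" by simp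
  also have "\<dots> = r ^ DIM('a) * measure lborel (ball (0::'a) 1)" by (rule content_ball_conv_unit_ball[OF r])
  finally show ?thesis .
qed

lemma meas_cube: "0 \<le> l \<Longrightarrow> measure lebesgue (cube (a::'a::euclidean_space) l) = l ^ DIM('a)"
proof -
  assume l: "0 \<le> l"
  have ne: "cbox a (a + l *\<^sub>R One) \<noteq> {}" using l by (simp add: box_ne_empty inner_add_left One_Basis)
  have "measure lborel (cbox a (a + l *\<^sub>R One)) = (\<Prod>i\<in>(Basis::'a set). l)"
    using content_cbox'[OF ne] by (simp add: inner_add_left One_Basis)
  moreover have "measure lebesgue (cbox a (a + l *\<^sub>R One)) = measure lborel (cbox a (a + l *\<^sub>R One))" by simp
  ultimately show ?thesis by (simp add: cube_def)
qed

lemma int_mono_sub: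
  fixes f :: "'a::euclidean_space \<Rightarrow> real"
  assumes "locally_integrable f" "A \<subseteq> B" "A \<in> sets lebesgue" "B \<in> sets lebesgue" "bounded B"
  shows "(LINT x:A|lebesgue. \<bar>f x\<bar>) \<le> (LINT x:B|lebesgue. \<bar>f x\<bar>)"
proof -
  have "compact (closure B)" using assms(5) by (simp add: compact_closure)
  then have iC: "set_integrable lebesgue (closure B) f" using assms(1) by (simp add: locally_integrable_def)
  have iB: "set_integrable lebesgue B f"
    by (rule set_integrable_subset[OF iC assms(4) closure_subset])
  have iA: "set_integrable lebesgue A f"
    by (rule set_integrable_subset[OF iB assms(3) assms(2)])
  have "integrable lebesgue (\<lambda>x. indicator A x * \<bar>f x\<bar>)" using set_integrable_abs[OF iA] by (simp add: set_integrable_def)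
  moreover have "integrable lebesgue (\<lambda>x. indicator B x * \<bar>f x\<bar>)" using set_integrable_abs[OF iB] by (simp add: set_integrable_def)
  ultimately have "(\<integral>x. indicator A x * \<bar>f x\<bar> \<partial>lebesgue) \<le> (\<integral>x. indicator B x * \<bar>f x\<bar> \<partial>lebesgue)"
    by (rule integral_mono) (use assms(2) in \<open>auto simp: indicator_def\<close>)
  then show ?thesis by (simp add: set_lebesgue_integral_def)
qed

lemma int_nonneg: "0 \<le> (LINT x:A|lebesgue. \<bar>(f::'a::euclidean_space\<Rightarrow>real) x\<bar>)"
  unfolding set_lebesgue_integral_def by (rule integral_nonneg_AE) auto

lemma ball_in_cube:
  fixes c :: "'a::euclidean_space"
  assumes "0 < r" "ball c r \<subseteq> cube a l" shows "2 * r \<le> l"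
proof (rule field_le_epsilon)
  fix e :: real assume e: "0 < e"
  obtain i :: 'a where i: "i \<in> Basis" using nonempty_Basis by blast
  define t where "t = max 0 (r - e/2)"
  have t: "0 \<le> t" "t < r" "r - e/2 \<le> t" using e assms(1) by (auto simp: t_def)
  have "c + t *\<^sub>R i \<in> ball c r" "c - t *\<^sub>R i \<in> ball c r" using t i by (auto simp: dist_norm)
  then have "c + t *\<^sub>R i \<in> cube a l" "c - t *\<^sub>R i \<in> cube a l" using assms(2) by auto
  then have "(c + t *\<^sub>R i) \<bullet> i \<le> a \<bullet> i + l" "a \<bullet> i \<le> (c - t *\<^sub>R i) \<bullet> i"
    using i unfolding mem_cube by blast+
  then have "c \<bullet> i + t \<le> a \<bullet> i + l" "a \<bullet> i \<le> c \<bullet> i - t" using i by (auto simp: inner_add_left inner_diff_left)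
  then show "2 * r \<le> l + e" using t by linarith
qed

lemma cube_in_cube:
  fixes a :: "'a::euclidean_space"
  assumes "0 < l" "cube a l \<subseteq> cube b m" shows "l \<le> m"
proof -
  obtain i :: 'a where i: "i \<in> Basis" using nonempty_Basis by blast
  have "a \<in> cube a l" "a + l *\<^sub>R One \<in> cube a l" using assms(1) by (auto simp: mem_cube inner_add_left One_Basis)
  then have "a \<in> cube b m" "a + l *\<^sub>R One \<in> cube b m" using assms(2) by auto
  then have "b \<bullet> i \<le> a \<bullet> i" "(a + l *\<^sub>R One) \<bullet> i \<le> b \<bullet> i + m"
    using i unfolding mem_cube by blast+
  then show ?thesis using i by (simp add: inner_add_left One_Basis)
qed

lemma cube_in_ball:
  fixes c :: "'a::euclidean_space" and m :: real
  assumes "c \<in> cube b m" "0 < m" shows "cube b m \<subseteq> ball c ((real DIM('a) + 1) * m)"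
proof
  fix y assume y: "y \<in> cube b m"
  have "\<And>i. i \<in> Basis \<Longrightarrow> \<bar>(y - c) \<bullet> i\<bar> \<le> m"
  proof -
    fix i :: 'a assume i: "i \<in> Basis"
    have "b \<bullet> i \<le> c \<bullet> i" "c \<bullet> i \<le> b \<bullet> i + m" "b \<bullet> i \<le> y \<bullet> i" "y \<bullet> i \<le> b \<bullet> i + m"
      using assms(1) y i unfolding mem_cube by blast+
    then show "\<bar>(y - c) \<bullet> i\<bar> \<le> m" by (simp add: inner_diff_left)
  qed
  then have "(\<Sum>i\<in>Basis. \<bar>(y - c) \<bullet> i\<bar>) \<le> (\<Sum>i\<in>(Basis::'a set). m)" by (intro sum_mono) auto
  then have "norm (y - c) \<le> real DIM('a) * m" using norm_le_l1[of "y - c"] by simp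
  then show "y \<in> ball c ((real DIM('a) + 1) * m)" using assms(2) by (simp add: dist_norm norm_minus_commute algebra_simps)
qed

lemma arith_chain:
  fixes w m r l K k s IP Is IB IQ \<alpha> :: real and n :: nat
  assumes w: "0 < w" and m: "0 < m" and r: "0 < r" and l: "0 < l" and K: "0 < K" and k: "1 \<le> k"
    and s: "s = k * m" and P: "IP \<le> Is" "0 \<le> IP" and Q: "IB \<le> IQ" "0 \<le> IB"
    and lK: "l \<le> K * r" and rl: "r \<le> l" and a: "0 < \<alpha>"
    and key: "s powr \<alpha> * (Is / (s^n * w)) \<le> r powr \<alpha> * (IB / (r^n * w))"
  shows "m powr \<alpha> * (IP / m^n) \<le> (k^n * K^n) * (l powr \<alpha> * (IQ / l^n))"
proof -
  have ms: "m \<le> s" using s k m by (simp add: mult_le_cancel_right1)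
  have Is0: "0 \<le> Is" using P by linarith
  have s0: "0 < s" using ms m by linarith
  have "m powr \<alpha> * (IP / m^n) \<le> m powr \<alpha> * (Is / m^n)"
    using P m by (intro mult_left_mono divide_right_mono) auto
  also have "\<dots> = w * k^n * (m powr \<alpha> * (Is / (s^n * w)))"
    using w m k s by (simp add: field_simps power_mult_distrib)
  also have "\<dots> \<le> w * k^n * (s powr \<alpha> * (Is / (s^n * w)))"
    using w k ms m Is0 s0 a by (intro mult_left_mono mult_right_mono powr_mono2) auto
  also have "\<dots> \<le> w * k^n * (r powr \<alpha> * (IB / (r^n * w)))"
    using key w k by (intro mult_left_mono) auto
  also have "\<dots> = k^n * (r powr \<alpha> * (IB / r^n))"
    using w by (simp add: field_simps)
  also have "\<dots> \<le> k^n * (r powr \<alpha> * (IQ / r^n))"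
    using Q r k by (intro mult_left_mono divide_right_mono) auto
  also have "\<dots> \<le> k^n * (l powr \<alpha> * (IQ / r^n))"
    using Q r k rl a by (intro mult_left_mono mult_right_mono powr_mono2) auto
  also have "IQ / r^n \<le> K^n * (IQ / l^n)"
  proof -
    have "l^n \<le> (K*r)^n" using lK l by (intro power_mono) auto
    then have "l^n \<le> K^n * r^n" by (simp add: power_mult_distrib)
    then have "IQ * l^n \<le> IQ * (K^n * r^n)" using Q by (intro mult_left_mono) auto
    then show ?thesis using r l by (simp add: field_simps)
  qed
  then have "k^n * (l powr \<alpha> * (IQ / r^n)) \<le> k^n * (l powr \<alpha> * (K^n * (IQ / l^n)))"
    using k by (intro mult_left_mono) auto
  also have "\<dots> = (k^n * K^n) * (l powr \<alpha> * (IQ / l^n))" by simp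
  finally show ?thesis .
qed

lemma maxprop:
  fixes f :: "'a::euclidean_space \<Rightarrow> real"
  assumes "(c, r) \<in> Bc \<alpha> f \<or> (c, r) \<in> Bu \<alpha> f" "r < s"
  shows "0 < r \<and> s powr \<alpha> * avg f (ball c s) \<le> r powr \<alpha> * avg f (ball c r)"
  using assms(1)
proof
  assume "(c, r) \<in> Bc \<alpha> f"
  then obtain x where "(c, r) \<in> Bc_at \<alpha> f x" unfolding Bc_def by blast
  then have cx: "c = x" and r: "0 < r" and eq: "ereal (r powr \<alpha> * avg f (ball c r)) = Mc \<alpha> f c"
    unfolding Bc_at_def by auto
  have "ereal (s powr \<alpha> * avg f (ball c s)) \<le> Mc \<alpha> f c"
    unfolding Mc_def using r assms(2) by (intro SUP_upper) auto
  then show ?thesis using eq[symmetric] r by simp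
next
  assume "(c, r) \<in> Bu \<alpha> f"
  then obtain x where "(c, r) \<in> Bu_at \<alpha> f x" unfolding Bu_def by blast
  then have r: "0 < r" and xc: "x \<in> closure (ball c r)" and eq: "ereal (r powr \<alpha> * avg f (ball c r)) = Mu \<alpha> f x"
    unfolding Bu_at_def by auto
  have "x \<in> ball c s" using xc r assms(2) by (simp add: dist_commute)
  then have mem: "(c, s) \<in> {(c, r). 0 < r \<and> x \<in> ball c r}" using r assms(2) by auto
  have "(\<lambda>(c, r). ereal (r powr \<alpha> * avg f (ball c r))) (c, s) \<le> Mu \<alpha> f x"
    unfolding Mu_def by (rule SUP_upper[OF mem])
  then show ?thesis using eq[symmetric] r by simp
qed

theorem lemma4p3:
  fixes \<alpha> :: real and K :: real
  assumes "0 < \<alpha>" and "\<alpha> < real DIM('a::euclidean_space)" and "0 < K"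
  shows "\<exists>C>0. \<forall>(f :: 'a \<Rightarrow> real) \<B> c r a l b m.
           locally_integrable f \<longrightarrow> \<B> \<in> {Bc \<alpha> f, Bu \<alpha> f} \<longrightarrow> (c, r) \<in> \<B> \<longrightarrow>
           0 < l \<longrightarrow> ball c r \<subseteq> cube a l \<longrightarrow> l \<le> K * r \<longrightarrow>
           0 < m \<longrightarrow> cube a l \<subseteq> cube b m \<longrightarrow>
           m powr \<alpha> * avg f (cube b m) \<le> C * (l powr \<alpha> * avg f (cube a l))"
proof (intro exI conjI allI impI)
  define n where "n = DIM('a)"
  define k where "k = real n + 1"
  show "0 < k^n * K^n" using assms(3) by (simp add: k_def)
  fix f :: "'a \<Rightarrow> real" and \<B> c r a l b m
  assume f: "locally_integrable f" and B: "\<B> \<in> {Bc \<alpha> f, Bu \<alpha> f}" and cr: "(c, r) \<in> \<B>"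
    and l: "0 < l" and bc: "ball c r \<subseteq> cube a l" and lK: "l \<le> K * r"
    and m: "0 < m" and cc: "cube a l \<subseteq> cube b m"
  have crB: "(c, r) \<in> Bc \<alpha> f \<or> (c, r) \<in> Bu \<alpha> f" using B cr by auto
  define s where "s = k * m"
  have k1: "1 \<le> k" by (simp add: k_def)
  have r: "0 < r" using maxprop[OF crB, of "r + 1"] by simp
  have rl: "2 * r \<le> l" by (rule ball_in_cube[OF r bc])
  have lm: "l \<le> m" by (rule cube_in_cube[OF l cc])
  have "c \<in> ball c r" using r by simp
  then have cP: "c \<in> cube b m" using bc cc by blast
  have Psub: "cube b m \<subseteq> ball c s" unfolding s_def k_def n_def by (rule cube_in_ball[OF cP m])
  have ms: "m \<le> s" using k1 m by (simp add: s_def mult_le_cancel_right1)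
  have rs: "r < s" using rl lm ms r by linarith
  have key: "s powr \<alpha> * avg f (ball c s) \<le> r powr \<alpha> * avg f (ball c r)"
    using maxprop[OF crB rs] by simp
  define w where "w = measure lborel (ball (0::'a) 1)"
  have w: "0 < w" unfolding w_def by (rule content_ball_pos) simp
  have IP: "(LINT x:cube b m|lebesgue. \<bar>f x\<bar>) \<le> (LINT x:ball c s|lebesgue. \<bar>f x\<bar>)"
    by (rule int_mono_sub[OF f Psub]) (auto simp: cube_def)
  have IB: "(LINT x:ball c r|lebesgue. \<bar>f x\<bar>) \<le> (LINT x:cube a l|lebesgue. \<bar>f x\<bar>)"
    by (rule int_mono_sub[OF f bc]) (auto simp: cube_def)
  have avgs: "avg f (ball c s) = (LINT x:ball c s|lebesgue. \<bar>f x\<bar>) / (s^n * w)"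
    using meas_ball[of s c] ms m by (simp add: avg_def w_def n_def)
  have avgr: "avg f (ball c r) = (LINT x:ball c r|lebesgue. \<bar>f x\<bar>) / (r^n * w)"
    using meas_ball[of r c] r by (simp add: avg_def w_def n_def)
  have avgP: "avg f (cube b m) = (LINT x:cube b m|lebesgue. \<bar>f x\<bar>) / m^n"
    using m by (simp add: avg_def meas_cube n_def)
  have avgQ: "avg f (cube a l) = (LINT x:cube a l|lebesgue. \<bar>f x\<bar>) / l^n"
    using l by (simp add: avg_def meas_cube n_def)
  show "m powr \<alpha> * avg f (cube b m) \<le> k^n * K^n * (l powr \<alpha> * avg f (cube a l))"
    unfolding avgP avgQ
    by (rule arith_chain[OF w m r l assms(3) k1 s_def IP int_nonneg IB int_nonneg lK _ assms(1)])
       (use rl r key avgs avgr in auto)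
qed

end
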